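(* Let $\mathcal{S}$ be an abstract numeration system and $Y\subseteq\mathbb{N}^{\mathbb{N}}$. Then $Y$ is weakly $\mathcal{S}$-codable if and only if $P_v(Y)$ is $\mathcal{S}$-recognizable for every finite word $v$ over $\mathbb{N}_{>0}$.
   Context: ANS: $\mathcal{S}=(L,\prec)$ with $L$ an infinite language over a finite alphabet $\Sigma$ and $\prec$ a total order on $L$ of order type $\omega$; $\mathrm{rep}(n)$ is the $n$-th word of $L$ (from $n=0$). For $(n_1,\dots,n_d)\in\mathbb{N}^d$, $\mathrm{rep}(n_1,\dots,n_d)$ is the word over $(\Sigma\cup\{\#\})^d$ obtained by left-padding each $\mathrm{rep}(n_i)$ with a new symbol $\#$ to the maximal length. $Z\subseteq\mathbb{N}^d$ is $\mathcal{S}$-recognizable if $\mathrm{rep}(Z)$ is regular. For $\mathbf{y}\in\mathbb{N}^{\mathbb{N}}$: $\sum\mathbf{y}=\sum_iy_i$; if $\sum\mathbf{y}=d<\infty$, $\nu(\mathbf{y})$ is the unique $(n_1,\dots,n_d)$ with $n_1\le\dots\le n_d$ and $y_j=|\{k:n_k=j\}|$ for all $j$. $Y$ is weakly $\mathcal{S}$-codable if for every $k$ the set $\{\nu(\mathbf{y}):\mathbf{y}\in Y,\sum\mathbf{y}\le k\}$ has $\mathcal{S}$-recognizable intersection with each $\mathbb{N}^i$. For $\mathbf{y}$ with finite support, $s(\mathbf{y})=(n_1,\dots,n_k)$ lists the support $\{n:y_n\ne0\}$ in increasing order, and $e(\mathbf{y})$ is the word obtained from $\mathbf{y}$ by erasing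 all $0$'s. For $v\in\mathbb{N}_{>0}^*$: $Q_v(Y)=\{\mathbf{y}\in Y:e(\mathbf{y})=v\}$ and $P_v(Y)=s(Q_v(Y))\subseteq\mathbb{N}^{|v|}$. *)

theory Defs
  imports Main
begin

definition regular_on :: "'b set \<Rightarrow> 'b list set \<Rightarrow> bool" where
  "regular_on A L \<longleftrightarrow> L \<subseteq> lists A \<and>
     (\<exists>(Q::nat set) (delta::nat \<Rightarrow> 'b \<Rightarrow> nat) q0 F.
        finite Q \<and> q0 \<in> Q \<and> (\<forall>q\<in>Q. \<forall>a\<in>A. delta q a \<in> Q) \<and> F \<subseteq> Q \<and>
        L = {w \<in> lists A. foldl delta q0 w \<in> F})"

text \<open>An abstract numeration system (L, \<prec>) over a finite alphabet Alph, with \<prec> of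
  order type omega, is represented by its enumeration rep : nat -> words, where rep n is the
  n-th word of L. Order type omega means exactly: rep is injective, L = range rep, and
  rep i \<prec> rep j iff i < j.\<close>

definition ANS :: "'a set \<Rightarrow> (nat \<Rightarrow> 'a list) \<Rightarrow> bool" where
  "ANS Alph rep \<longleftrightarrow> finite Alph \<and> inj rep \<and> (\<forall>n. set (rep n) \<subseteq> Alph)"

text \<open>Tuples in N^d are nat lists of length d; the padding symbol # is None.
  A letter of (Alph \<union> {#})^d is a list of length d.\<close>

definition pad :: "nat \<Rightarrow> 'a list \<Rightarrow> 'a option list" where
  "pad m w = replicate (m - length w) None @ map Some w"

definition rep_tuple :: "(nat \<Rightarrow> 'a list) \<Rightarrow> nat list \<Rightarrow> 'a option list list" where
  "rep_tuple rep ns =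
     (let m = fold max (map (\<lambda>n. length (rep n)) ns) 0
      in map (\<lambda>k. map (\<lambda>n. pad m (rep n) ! k) ns) [0..<m])"

definition tuple_alphabet :: "'a set \<Rightarrow> nat \<Rightarrow> 'a option list set" where
  "tuple_alphabet Alph d = {l. length l = d \<and> set l \<subseteq> insert None (Some ` Alph)}"

definition S_recognizable :: "'a set \<Rightarrow> (nat \<Rightarrow> 'a list) \<Rightarrow> nat \<Rightarrow> nat list set \<Rightarrow> bool" where
  "S_recognizable Alph rep d Z \<longleftrightarrow>
     Z \<subseteq> {ns. length ns = d} \<and> regular_on (tuple_alphabet Alph d) (rep_tuple rep ` Z)"

definition supp :: "(nat \<Rightarrow> nat) \<Rightarrow> nat set" where
  "supp y = {n. y n \<noteq> 0}"

text \<open>sum y \<le> k (the sum over all i; it is finite iff y has finite support).\<close>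
definition sum_le :: "(nat \<Rightarrow> nat) \<Rightarrow> nat \<Rightarrow> bool" where
  "sum_le y k \<longleftrightarrow> finite (supp y) \<and> sum y (supp y) \<le> k"

definition nu :: "(nat \<Rightarrow> nat) \<Rightarrow> nat list" where
  "nu y = (THE ns. sorted ns \<and> (\<forall>j. y j = count_list ns j))"

definition weakly_codable :: "'a set \<Rightarrow> (nat \<Rightarrow> 'a list) \<Rightarrow> (nat \<Rightarrow> nat) set \<Rightarrow> bool" where
  "weakly_codable Alph rep Y \<longleftrightarrow>
     (\<forall>k i. S_recognizable Alph rep i
              ({nu y | y. y \<in> Y \<and> sum_le y k} \<inter> {ns. length ns = i}))"

definition s_supp :: "(nat \<Rightarrow> nat) \<Rightarrow> nat list" where
  "s_supp y = sorted_list_of_set (supp y)"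

definition e_word :: "(nat \<Rightarrow> nat) \<Rightarrow> nat list" where
  "e_word y = map y (s_supp y)"

definition Q_v :: "nat list \<Rightarrow> (nat \<Rightarrow> nat) set \<Rightarrow> (nat \<Rightarrow> nat) set" where
  "Q_v v Y = {y \<in> Y. finite (supp y) \<and> e_word y = v}"

definition P_v :: "nat list \<Rightarrow> (nat \<Rightarrow> nat) set \<Rightarrow> nat list set" where
  "P_v v Y = s_supp ` Q_v v Y"

end

theory Submission imports Defs "HOL-Library.Nat_Bijection" "HOL-Library.Multiset"
begin

lemma foldl_closed:
  assumes "\<forall>q\<in>Q. \<forall>a\<in>A. delta q a \<in> Q" "q \<in> Q" "w \<in> lists A"
  shows "foldl delta q w \<in> Q"
  using assms(2,3) by (induction w arbitrary: q) (use assms(1) in auto)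

lemma reg_intro:
  assumes "L \<subseteq> lists A" "finite (Q::nat set)" "qi \<in> Q" "\<forall>q\<in>Q. \<forall>a\<in>A. delta q a \<in> Q" "F \<subseteq> Q"
    "\<And>w. w \<in> lists A \<Longrightarrow> w \<in> L \<longleftrightarrow> foldl delta qi w \<in> F"
  shows "regular_on A L"
  unfolding regular_on_def
  apply (rule conjI, fact)
  apply (rule exI[of _ Q], rule exI[of _ delta], rule exI[of _ qi], rule exI[of _ F])
  using assms by blast

lemma reg_empty: "regular_on A {}"
  by (rule reg_intro[where Q="{0}" and qi=0 and F="{}" and delta="\<lambda>q a. 0"]) auto

lemma reg_lists: "regular_on A (lists A)"
  by (rule reg_intro[where Q="{0}" and qi=0 and F="{0}" and delta="\<lambda>q a. 0"]) 
     (auto, (induct_tac w, auto))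

lemma foldl_prod:
  "foldl (\<lambda>q a. prod_encode (d1 (fst (prod_decode q)) a, d2 (snd (prod_decode q)) a)) (prod_encode (p1, p2)) w
   = prod_encode (foldl d1 p1 w, foldl d2 p2 w)"
  by (induction w arbitrary: p1 p2) auto

lemma reg_binop:
  assumes r1: "regular_on A L1" and r2: "regular_on A L2"
    and L: "L \<subseteq> lists A"
    and op: "\<And>w. w \<in> lists A \<Longrightarrow> w \<in> L \<longleftrightarrow> f (w \<in> L1) (w \<in> L2)"
  shows "regular_on A L"
proof -
  from r1 obtain Q1 d1 q1 F1 where A1: "finite (Q1::nat set)" "q1 \<in> Q1" "\<forall>q\<in>Q1. \<forall>a\<in>A. d1 q a \<in> Q1" "F1 \<subseteq> Q1"
    "L1 = {w \<in> lists A. foldl d1 q1 w \<in> F1}" unfolding regular_on_def by blast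
  from r2 obtain Q2 d2 q2 F2 where A2: "finite (Q2::nat set)" "q2 \<in> Q2" "\<forall>q\<in>Q2. \<forall>a\<in>A. d2 q a \<in> Q2" "F2 \<subseteq> Q2"
    "L2 = {w \<in> lists A. foldl d2 q2 w \<in> F2}" unfolding regular_on_def by blast
  define delta where "delta = (\<lambda>q a. prod_encode (d1 (fst (prod_decode q)) a, d2 (snd (prod_decode q)) a))"
  define Q where "Q = prod_encode ` (Q1 \<times> Q2)"
  define F where "F = prod_encode ` {(a,b). a \<in> Q1 \<and> b \<in> Q2 \<and> f (a \<in> F1) (b \<in> F2)}"
  show ?thesis
  proof (rule reg_intro[where Q=Q and delta=delta and qi="prod_encode (q1,q2)" and F=F])
    show "finite Q" using A1 A2 by (simp add: Q_def)
    show "prod_encode (q1, q2) \<in> Q" using A1 A2 by (simp add: Q_def)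
    show "\<forall>q\<in>Q. \<forall>a\<in>A. delta q a \<in> Q" using A1 A2 by (auto simp: Q_def delta_def)
    show "F \<subseteq> Q" by (auto simp: Q_def F_def)
    fix w assume w: "w \<in> lists A"
    have c1: "foldl d1 q1 w \<in> Q1" by (rule foldl_closed[OF A1(3) A1(2) w])
    have c2: "foldl d2 q2 w \<in> Q2" by (rule foldl_closed[OF A2(3) A2(2) w])
    have "foldl delta (prod_encode (q1, q2)) w = prod_encode (foldl d1 q1 w, foldl d2 q2 w)"
      unfolding delta_def by (rule foldl_prod)
    then have "foldl delta (prod_encode (q1, q2)) w \<in> F \<longleftrightarrow> f (foldl d1 q1 w \<in> F1) (foldl d2 q2 w \<in> F2)"
      using c1 c2 by (auto simp: F_def inj_prod_encode inj_eq)
    then show "w \<in> L \<longleftrightarrow> foldl delta (prod_encode (q1, q2)) w \<in> F"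
      using op[OF w] w A1(5) A2(5) by auto
  qed (fact L)
qed

lemma reg_union: "regular_on A L1 \<Longrightarrow> regular_on A L2 \<Longrightarrow> regular_on A (L1 \<union> L2)"
  by (rule reg_binop[where f="(\<or>)"]) (auto simp: regular_on_def)

lemma reg_inter: "regular_on A L1 \<Longrightarrow> regular_on A L2 \<Longrightarrow> regular_on A (L1 \<inter> L2)"
  by (rule reg_binop[where f="(\<and>)"]) (auto simp: regular_on_def)

lemma reg_UN: "finite I \<Longrightarrow> (\<And>i. i \<in> I \<Longrightarrow> regular_on A (L i)) \<Longrightarrow> regular_on A (\<Union>i\<in>I. L i)"
  by (induction I rule: finite_induct) (auto intro: reg_empty reg_union)

lemma reg_INT: "finite I \<Longrightarrow> (\<And>i. i \<in> I \<Longrightarrow> regular_on A (L i)) \<Longrightarrow> regular_on A (lists A \<inter> (\<Inter>i\<in>I. L i))"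
proof (induction I rule: finite_induct)
  case empty then show ?case by (simp add: reg_lists)
next
  case (insert x F)
  have "lists A \<inter> (\<Inter>i\<in>insert x F. L i) = L x \<inter> (lists A \<inter> (\<Inter>i\<in>F. L i))" by auto
  then show ?case using insert by (simp add: reg_inter)
qed

lemma reg_inv_hom:
  assumes r: "regular_on A L" and h: "h ` B \<subseteq> A"
  shows "regular_on B {w \<in> lists B. map h w \<in> L}"
proof -
  from r obtain Q d q0 F where A1: "finite (Q::nat set)" "q0 \<in> Q" "\<forall>q\<in>Q. \<forall>a\<in>A. d q a \<in> Q" "F \<subseteq> Q"
    "L = {w \<in> lists A. foldl d q0 w \<in> F}" unfolding regular_on_def by blast
  have fm: "foldl (\<lambda>q a. d q (h a)) q w = foldl d q (map h w)" for q w
    by (induction w arbitrary: q) auto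
  show ?thesis
    apply (rule reg_intro[where Q=Q and delta="\<lambda>q a. d q (h a)" and qi=q0 and F=F])
    using A1 h by (auto simp: fm image_subset_iff)
qed

lemma reg_enlarge:
  assumes r: "regular_on B L" and BA: "B \<subseteq> A"
  shows "regular_on A L"
proof -
  from r obtain Q d q0 F where A1: "finite (Q::nat set)" "q0 \<in> Q" "\<forall>q\<in>Q. \<forall>a\<in>B. d q a \<in> Q" "F \<subseteq> Q"
    "L = {w \<in> lists B. foldl d q0 w \<in> F}" and LB: "L \<subseteq> lists B" unfolding regular_on_def by blast
  obtain s :: nat where s: "s \<notin> Q" using A1(1) infinite_UNIV_nat ex_new_if_finite by blast
  define d' where "d' = (\<lambda>q a. if q \<in> Q \<and> a \<in> B then d q a else s)"
  have fs: "foldl d' s w = s" for w by (induction w) (auto simp: d'_def s)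
  have fq: "q \<in> Q \<Longrightarrow> foldl d' q w = (if w \<in> lists B then foldl d q w else s)" for q w
  proof (induction w arbitrary: q)
    case (Cons a w) then show ?case using A1(3) fs by (auto simp: d'_def)
  qed simp
  show ?thesis
    apply (rule reg_intro[where Q="insert s Q" and delta=d' and qi=q0 and F=F])
    using A1 LB BA s fq by (auto simp: d'_def)
qed

lemma reg_exists_letter: "regular_on A {w \<in> lists A. \<exists>l\<in>set w. P l}"
proof -
  define d :: "nat \<Rightarrow> _ \<Rightarrow> nat" where "d = (\<lambda>q a. if q = (2::nat) \<or> P a then 2 else 0)"
  have f1: "foldl d 2 w = 2" for w by (induction w) (auto simp: d_def)
  have f0: "foldl d 0 w = (if \<exists>l\<in>set w. P l then 2 else 0)" for w
    by (induction w) (auto simp: d_def f1[unfolded d_def])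
  show ?thesis
    by (rule reg_intro[where Q="{0,2}" and delta=d and qi=0 and F="{2}"]) (auto simp: f0, auto simp: d_def)
qed


fun dupT :: "nat list \<Rightarrow> 'b list \<Rightarrow> 'b list" where
  "dupT (x#v) (n#ns) = replicate x n @ dupT v ns"
| "dupT _ _ = []"

fun undupT :: "nat list \<Rightarrow> 'b list \<Rightarrow> 'b list" where
  "undupT [] ms = []"
| "undupT (x#v) ms = hd ms # undupT v (drop x ms)"

lemma length_dupT: "length v = length ns \<Longrightarrow> length (dupT v ns) = sum_list v"
  by (induction v ns rule: dupT.induct) auto

lemma set_dupT_sub: "set (dupT v ns) \<subseteq> set ns"
  by (induction v ns rule: dupT.induct) auto

lemma set_dupT: "length v = length ns \<Longrightarrow> \<forall>x\<in>set v. 0 < x \<Longrightarrow> set (dupT v ns) = set ns"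
  by (induction v ns rule: dupT.induct) auto

lemma map_dupT: "map f (dupT v ns) = dupT v (map f ns)"
  by (induction v ns rule: dupT.induct) auto

lemma undupT_dupT: "length v = length l \<Longrightarrow> \<forall>x\<in>set v. 0 < x \<Longrightarrow> undupT v (dupT v l) = l"
  by (induction v l rule: dupT.induct) auto

lemma sorted_dupT: "sorted ns \<Longrightarrow> sorted (dupT v ns)"
proof (induction v ns rule: dupT.induct)
  case (1 x v n ns)
  then show ?case using set_dupT_sub[of v ns] by (auto simp: sorted_append)
qed auto

lemma sorted_dupT_D: "length v = length ns \<Longrightarrow> \<forall>x\<in>set v. 0 < x \<Longrightarrow> sorted (dupT v ns) \<Longrightarrow> sorted ns"
proof (induction v ns rule: dupT.induct)
  case (1 x v n ns)
  then show ?case using set_dupT[of v ns] by (auto simp: sorted_append)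
qed auto

lemma count_dupT:
  "distinct ns \<Longrightarrow> length v = length ns \<Longrightarrow>
     map (count_list (dupT v ns)) ns = v \<and> (\<forall>j. j \<notin> set ns \<longrightarrow> count_list (dupT v ns) j = 0)"
proof (induction v ns rule: dupT.induct)
  case (1 x v n ns)
  have cr: "count_list (replicate x n) j = (if j = n then x else 0)" for j
    by (induction x) auto
  have d: "distinct ns" "n \<notin> set ns" and lv: "length v = length ns" using 1(2,3) by auto
  have IH: "map (count_list (dupT v ns)) ns = v" "\<forall>j. j \<notin> set ns \<longrightarrow> count_list (dupT v ns) j = 0"
    using 1(1)[OF d(1) lv] by auto
  have "map (\<lambda>a. (if a = n then x else 0) + count_list (dupT v ns) a) ns = map (count_list (dupT v ns)) ns"
    using d by (auto intro: map_cong)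
  then show ?case using IH d by (auto simp: cr)
qed auto

definition cols :: "nat \<Rightarrow> 'b list list \<Rightarrow> 'b list list" where
  "cols d w = map (\<lambda>a. map (\<lambda>l. l ! a) w) [0..<d]"

lemma cols_Suc: "\<forall>l\<in>set w. l \<noteq> [] \<Longrightarrow> cols (Suc d) w = map hd w # cols d (map tl w)"
  unfolding cols_def map_upt_Suc
  by (auto simp: hd_conv_nth intro!: map_cong) (metis list.exhaust_sel nth_Cons_Suc)

lemma cols_dupT:
  "\<forall>l\<in>set w. length l = length v \<Longrightarrow> \<forall>x\<in>set v. 0 < x \<Longrightarrow>
    cols (sum_list v) (map (dupT v) w) = dupT v (cols (length v) w)"
proof (induction v arbitrary: w)
  case Nil then show ?case by (simp add: cols_def)
next
  case (Cons x v)
  have ne: "\<forall>l\<in>set w. l \<noteq> []" using Cons.prems by auto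
  have dl: "dupT (x#v) l = replicate x (hd l) @ dupT v (tl l)" if "l \<in> set w" for l
    using ne that by (cases l) auto
  have ltl: "length (dupT v (tl l)) = sum_list v" if "l \<in> set w" for l
    using Cons.prems that by (auto simp: length_dupT)
  have IH: "cols (sum_list v) (map (dupT v) (map tl w)) = dupT v (cols (length v) (map tl w))"
    using Cons.prems by (intro Cons.IH) auto
  have "cols (sum_list (x#v)) (map (dupT (x#v)) w)
      = map (\<lambda>a. map (\<lambda>l. dupT (x#v) l ! a) w) ([0..<x] @ [x..<x + sum_list v])"
    unfolding cols_def by (simp add: upt_add_eq_append[of 0 x, simplified])
  also have "\<dots> = replicate x (map hd w) @ cols (sum_list v) (map (dupT v) (map tl w))"
  proof -
    have p1: "map (\<lambda>a. map (\<lambda>l. dupT (x#v) l ! a) w) [0..<x] = replicate x (map hd w)"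
      by (rule nth_equalityI) (auto simp: dl nth_append intro!: map_cong)
    have p2: "map (\<lambda>a. map (\<lambda>l. dupT (x#v) l ! a) w) [x..<x + sum_list v]
        = cols (sum_list v) (map (dupT v) (map tl w))"
      unfolding cols_def by (rule nth_equalityI) (auto simp: dl nth_append intro!: map_cong)
    show ?thesis by (simp add: p1 p2)
  qed
  also have "\<dots> = dupT (x#v) (cols (length (x#v)) w)"
    using ne IH by (simp add: cols_Suc)
  finally show ?case .
qed


definition Mx :: "(nat \<Rightarrow> 'a list) \<Rightarrow> nat list \<Rightarrow> nat" where
  "Mx rep ns = fold max (map (\<lambda>n. length (rep n)) ns) 0"

lemma rep_tuple_alt: "rep_tuple rep ns = map (\<lambda>k. map (\<lambda>n. pad (Mx rep ns) (rep n) ! k) ns) [0..<Mx rep ns]"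
  by (simp add: rep_tuple_def Mx_def Let_def)

lemma Mx_Max: "Mx rep ns = Max (insert 0 ((\<lambda>n. length (rep n)) ` set ns))"
proof -
  have "Mx rep ns = Max (set (0 # map (\<lambda>n. length (rep n)) ns))"
    unfolding Mx_def by (simp only: Max.set_eq_fold)
  then show ?thesis by simp
qed

lemma Mx_ge: "n \<in> set ns \<Longrightarrow> length (rep n) \<le> Mx rep ns"
  unfolding Mx_Max by (rule Max_ge) auto

lemma Mx_set: "set ns = set ns' \<Longrightarrow> Mx rep ns = Mx rep ns'"
  unfolding Mx_Max by simp

lemma length_pad: "length w \<le> m \<Longrightarrow> length (pad m w) = m"
  by (simp add: pad_def)

lemma set_pad: "set (pad m w) \<subseteq> insert None (Some ` set w)"
  by (auto simp: pad_def)

lemma unpad: "map the (filter (\<lambda>x. x \<noteq> None) (pad m w)) = w"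
  by (induction w) (auto simp: pad_def filter_replicate)

lemma pad_inj: "pad m w1 = pad m w2 \<Longrightarrow> w1 = w2"
  by (metis unpad)

lemma letters_rep_tuple: "l \<in> set (rep_tuple rep ns) \<Longrightarrow> length l = length ns"
  by (auto simp: rep_tuple_alt)

lemma cols_rep_tuple: "cols (length ns) (rep_tuple rep ns) = map (\<lambda>n. pad (Mx rep ns) (rep n)) ns"
proof (rule nth_equalityI)
  fix a assume a: "a < length (cols (length ns) (rep_tuple rep ns))"
  then have a': "a < length ns" by (simp add: cols_def)
  have len: "length (pad (Mx rep ns) (rep (ns ! a))) = Mx rep ns"
    using a' by (intro length_pad Mx_ge) auto
  have "cols (length ns) (rep_tuple rep ns) ! a = map (\<lambda>k. pad (Mx rep ns) (rep (ns ! a)) ! k) [0..<Mx rep ns]"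
    using a' by (simp add: cols_def rep_tuple_alt)
  also have "\<dots> = pad (Mx rep ns) (rep (ns ! a))"
    using map_nth[of "pad (Mx rep ns) (rep (ns ! a))"] len by simp
  finally show "cols (length ns) (rep_tuple rep ns) ! a = map (\<lambda>n. pad (Mx rep ns) (rep n)) ns ! a"
    using a' by simp
qed (simp add: cols_def)

lemma rep_tuple_col_eq:
  assumes "inj rep" "a < length ns" "b < length ns"
  shows "ns ! a = ns ! b \<longleftrightarrow> (\<forall>l\<in>set (rep_tuple rep ns). l ! a = l ! b)"
proof -
  let ?w = "rep_tuple rep ns"
  have "(\<forall>l\<in>set ?w. l ! a = l ! b) \<longleftrightarrow> cols (length ns) ?w ! a = cols (length ns) ?w ! b"
    using assms by (simp add: cols_def map_eq_conv)
  also have "\<dots> \<longleftrightarrow> pad (Mx rep ns) (rep (ns ! a)) = pad (Mx rep ns) (rep (ns ! b))"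
    using assms by (simp add: cols_rep_tuple)
  also have "\<dots> \<longleftrightarrow> ns ! a = ns ! b"
    using assms(1) pad_inj by (metis injD)
  finally show ?thesis by simp
qed

lemma rep_tuple_TA:
  assumes "\<forall>n. set (rep n) \<subseteq> Alph"
  shows "rep_tuple rep ns \<in> lists (tuple_alphabet Alph (length ns))"
proof -
  have "pad (Mx rep ns) (rep n) ! k \<in> insert None (Some ` Alph)" if "n \<in> set ns" "k < Mx rep ns" for n k
  proof -
    have "length (pad (Mx rep ns) (rep n)) = Mx rep ns" using that by (intro length_pad Mx_ge)
    then have "pad (Mx rep ns) (rep n) ! k \<in> set (pad (Mx rep ns) (rep n))" using that by simp
    then show ?thesis using set_pad assms by blast
  qed
  then show ?thesis by (fastforce simp: rep_tuple_alt tuple_alphabet_def)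
qed

lemma rep_tuple_dupT:
  assumes "length v = length ns" "\<forall>x\<in>set v. 0 < x"
  shows "rep_tuple rep (dupT v ns) = map (dupT v) (rep_tuple rep ns)"
proof -
  have M: "Mx rep (dupT v ns) = Mx rep ns" using set_dupT[OF assms] by (rule Mx_set)
  show ?thesis unfolding rep_tuple_alt M by (simp add: map_dupT)
qed

lemma sorted_count_unique:
  assumes "sorted (xs::nat list)" "sorted ys" "\<forall>j. count_list xs j = count_list ys j"
  shows "xs = ys"
proof -
  have "mset xs = mset ys" using assms(3) by (intro multiset_eqI) (simp add: count_mset)
  then show ?thesis using assms by (metis properties_for_sort sorted_sort_id)
qed

lemma s_supp_props:
  assumes "finite (supp y)"
  shows "set (s_supp y) = supp y" "distinct (s_supp y)" "sorted (s_supp y)"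
  using assms by (auto simp: s_supp_def)

lemma e_word_pos: "\<forall>x\<in>set (e_word y). 0 < x"
  by (cases "finite (supp y)") (auto simp: e_word_def s_supp_def supp_def)

lemma count_nu_cand:
  assumes "finite (supp y)"
  shows "count_list (dupT (e_word y) (s_supp y)) j = y j"
proof -
  have c: "map (count_list (dupT (e_word y) (s_supp y))) (s_supp y) = e_word y"
    "\<forall>j. j \<notin> set (s_supp y) \<longrightarrow> count_list (dupT (e_word y) (s_supp y)) j = 0"
    using count_dupT[of "s_supp y" "e_word y"] s_supp_props[OF assms] by (auto simp: e_word_def)
  show ?thesis
  proof (cases "j \<in> supp y")
    case True
    then have "j \<in> set (s_supp y)" using s_supp_props[OF assms] by simp
    then show ?thesis using c(1) unfolding e_word_def by (auto simp: map_eq_conv)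
  next
    case False
    then show ?thesis using c(2) s_supp_props[OF assms] by (auto simp: supp_def)
  qed
qed

lemma nu_eq:
  assumes "finite (supp y)"
  shows "nu y = dupT (e_word y) (s_supp y)"
  unfolding nu_def
proof (rule the_equality)
  show "sorted (dupT (e_word y) (s_supp y)) \<and> (\<forall>j. y j = count_list (dupT (e_word y) (s_supp y)) j)"
    using sorted_dupT s_supp_props[OF assms] count_nu_cand[OF assms] by auto
  fix ns assume "sorted ns \<and> (\<forall>j. y j = count_list ns j)"
  then show "ns = dupT (e_word y) (s_supp y)"
    using sorted_count_unique[of ns "dupT (e_word y) (s_supp y)"] sorted_dupT s_supp_props[OF assms]
      count_nu_cand[OF assms] by auto
qed

lemma length_e_word: "length (e_word y) = length (s_supp y)"
  by (simp add: e_word_def)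

lemma sum_supp_e_word:
  assumes "finite (supp y)"
  shows "sum y (supp y) = sum_list (e_word y)"
  using sum_list_distinct_conv_sum_set[of "s_supp y" y] s_supp_props[OF assms] by (simp add: e_word_def)

lemma length_nu:
  assumes "finite (supp y)"
  shows "length (nu y) = sum y (supp y)"
  using assms by (simp add: nu_eq length_dupT length_e_word sum_supp_e_word)


lemma reg_dup:
  assumes pos: "\<forall>x\<in>set v. 0 < x" and r: "regular_on (tuple_alphabet Alph (length v)) R"
  shows "regular_on (tuple_alphabet Alph (sum_list v)) (map (dupT v) ` R)"
proof -
  let ?T = "tuple_alphabet Alph (length v)"
  let ?B = "dupT v ` ?T"
  have RT: "R \<subseteq> lists ?T" using r by (simp add: regular_on_def)
  have ud: "undupT v (dupT v l) = l" if "l \<in> ?T" for l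
    using that pos by (intro undupT_dupT) (auto simp: tuple_alphabet_def)
  have eq: "map (dupT v) ` R = {w \<in> lists ?B. map (undupT v) w \<in> R}"
  proof (intro set_eqI iffI)
    fix w assume "w \<in> map (dupT v) ` R"
    then obtain u where u: "u \<in> R" "w = map (dupT v) u" by blast
    have "u \<in> lists ?T" using u RT by auto
    then have "map (undupT v) w = u" using u(2) ud by (auto intro!: map_idI)
    then show "w \<in> {w \<in> lists ?B. map (undupT v) w \<in> R}" using u \<open>u \<in> lists ?T\<close> by auto
  next
    fix w assume w: "w \<in> {w \<in> lists ?B. map (undupT v) w \<in> R}"
    have "map (dupT v) (map (undupT v) w) = w"
      using w ud by (auto intro!: map_idI)
    then show "w \<in> map (dupT v) ` R" using w by (metis (no_types, lifting) image_eqI mem_Collect_eq)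
  qed
  have "regular_on ?B {w \<in> lists ?B. map (undupT v) w \<in> R}"
    by (rule reg_inv_hom[OF r]) (auto simp: ud)
  moreover have "?B \<subseteq> tuple_alphabet Alph (sum_list v)"
    using set_dupT_sub by (fastforce simp: tuple_alphabet_def length_dupT)
  ultimately show ?thesis unfolding eq by (rule reg_enlarge)
qed

lemma sum_list_ge_length: "\<forall>x\<in>set (v::nat list). 0 < x \<Longrightarrow> length v \<le> sum_list v"
  by (induction v) auto

lemma finite_V: "finite {v::nat list. (\<forall>x\<in>set v. 0 < x) \<and> sum_list v = i \<and> P v}"
proof -
  have "{v::nat list. (\<forall>x\<in>set v. 0 < x) \<and> sum_list v = i \<and> P v} \<subseteq> {v. set v \<subseteq> {0..i} \<and> length v \<le> i}"
    using sum_list_ge_length member_le_sum_list by fastforce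
  moreover have "finite {v. set v \<subseteq> {0..i} \<and> length v \<le> (i::nat)}"
    by (rule finite_lists_length_le) simp
  ultimately show ?thesis by (rule finite_subset)
qed

lemma P_v_len: "ns \<in> P_v v Y \<Longrightarrow> length ns = length v"
  by (auto simp: P_v_def Q_v_def e_word_def)

theorem mainTheorem5:
  fixes Alph :: "'a set" and rep :: "nat \<Rightarrow> 'a list" and Y :: "(nat \<Rightarrow> nat) set"
  assumes "ANS Alph rep"
  shows "weakly_codable Alph rep Y \<longleftrightarrow>
           (\<forall>v. (\<forall>x\<in>set v. 0 < x) \<longrightarrow> S_recognizable Alph rep (length v) (P_v v Y))"
proof -
  have injr: "inj rep" and alph: "\<forall>n. set (rep n) \<subseteq> Alph" using assms by (auto simp: ANS_def)
  show ?thesis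
  proof
    assume wc: "weakly_codable Alph rep Y"
    show "\<forall>v. (\<forall>x\<in>set v. 0 < x) \<longrightarrow> S_recognizable Alph rep (length v) (P_v v Y)"
    proof (intro allI impI)
      fix v :: "nat list" assume pos: "\<forall>x\<in>set v. 0 < x"
      define d where "d = length v"
      define s where "s = sum_list v"
      define Z where "Z = {nu y | y. y \<in> Y \<and> sum_le y s} \<inter> {ns. length ns = s}"
      have rZ: "regular_on (tuple_alphabet Alph s) (rep_tuple rep ` Z)"
        using wc unfolding weakly_codable_def S_recognizable_def Z_def by blast
      define PR where "PR = {(j,k). j < k \<and> k < d}"
      define D where "D = (\<lambda>p. {w \<in> lists (tuple_alphabet Alph d). \<exists>l\<in>set w. l ! fst p \<noteq> l ! snd p})"
      define LL where "LL = {w \<in> lists (tuple_alphabet Alph d). map (dupT v) w \<in> rep_tuple rep ` Z}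
          \<inter> (lists (tuple_alphabet Alph d) \<inter> (\<Inter>p\<in>PR. D p))"
      have regLL: "regular_on (tuple_alphabet Alph d) LL"
        unfolding LL_def
      proof (rule reg_inter)
        show "regular_on (tuple_alphabet Alph d) {w \<in> lists (tuple_alphabet Alph d). map (dupT v) w \<in> rep_tuple rep ` Z}"
          by (rule reg_inv_hom[OF rZ]) (use set_dupT_sub in \<open>fastforce simp: tuple_alphabet_def length_dupT d_def s_def\<close>)
        have "finite PR" by (rule finite_subset[of _ "{..<d} \<times> {..<d}"]) (auto simp: PR_def)
        then show "regular_on (tuple_alphabet Alph d) (lists (tuple_alphabet Alph d) \<inter> (\<Inter>p\<in>PR. D p))"
          by (rule reg_INT) (simp add: D_def reg_exists_letter)
      qed
      have eq: "rep_tuple rep ` P_v v Y = LL"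
      proof (intro set_eqI iffI)
        fix w assume "w \<in> rep_tuple rep ` P_v v Y"
        then obtain y where y: "y \<in> Y" "finite (supp y)" "e_word y = v" "w = rep_tuple rep (s_supp y)"
          by (auto simp: P_v_def Q_v_def)
        let ?ns = "s_supp y"
        have len: "length ?ns = d" using y(3) by (simp add: d_def length_e_word[symmetric])
        have w1: "w \<in> lists (tuple_alphabet Alph d)" using rep_tuple_TA[OF alph, of ?ns] y len by simp
        have nu: "nu y = dupT v ?ns" using nu_eq[OF y(2)] y(3) by simp
        have "nu y \<in> Z" unfolding Z_def using y length_nu[OF y(2)] sum_supp_e_word[OF y(2)]
          by (auto simp: sum_le_def s_def)
        moreover have "map (dupT v) w = rep_tuple rep (nu y)"
          using rep_tuple_dupT[of v ?ns rep] pos len y(4) nu by (simp add: d_def)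
        ultimately have w2: "map (dupT v) w \<in> rep_tuple rep ` Z" by simp
        have "w \<in> D p" if "p \<in> PR" for p
        proof -
          obtain j k where p: "p = (j,k)" "j < k" "k < d" using \<open>p \<in> PR\<close> by (auto simp: PR_def)
          have "?ns ! j \<noteq> ?ns ! k" using s_supp_props(2)[OF y(2)] p len by (simp add: nth_eq_iff_index_eq)
          then show ?thesis using rep_tuple_col_eq[OF injr, of j ?ns k] p len w1 y(4) by (auto simp: D_def)
        qed
        then show "w \<in> LL" using w1 w2 by (auto simp: LL_def)
      next
        fix w assume "w \<in> LL"
        then have w1: "w \<in> lists (tuple_alphabet Alph d)" and w2: "map (dupT v) w \<in> rep_tuple rep ` Z"
          and wD: "\<And>p. p \<in> PR \<Longrightarrow> w \<in> D p" by (auto simp: LL_def)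
        obtain y where y: "y \<in> Y" "sum_le y s" "length (nu y) = s" "map (dupT v) w = rep_tuple rep (nu y)"
          using w2 by (auto simp: Z_def)
        have fy: "finite (supp y)" using y(2) by (simp add: sum_le_def)
        define ms where "ms = nu y"
        define M where "M = Mx rep ms"
        define f where "f = (\<lambda>n. pad M (rep n))"
        have injf: "inj f" unfolding f_def using injr pad_inj by (metis injI injD)
        have lw: "\<forall>l\<in>set w. length l = length v" using w1 by (auto simp: tuple_alphabet_def d_def)
        have "map f ms = cols s (rep_tuple rep ms)"
          using cols_rep_tuple[of ms rep] y(3) by (simp add: ms_def f_def M_def)
        also have "\<dots> = dupT v (cols d w)"
          using cols_dupT[OF lw pos] y(4) by (simp add: ms_def s_def d_def)
        finally have mf: "map f ms = dupT v (cols d w)" .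
        define ns where "ns = map (inv f) (cols d w)"
        have msd: "ms = dupT v ns"
        proof -
          have "ms = map (inv f) (map f ms)" using injf by (simp add: map_idI)
          then show ?thesis using mf by (simp add: ns_def map_dupT)
        qed
        have lns: "length ns = d" by (simp add: ns_def cols_def)
        have "map (dupT v) (rep_tuple rep ns) = map (dupT v) w"
          using rep_tuple_dupT[of v ns rep] pos lns y(4) msd by (simp add: d_def ms_def)
        then have "map (undupT v) (map (dupT v) (rep_tuple rep ns)) = map (undupT v) (map (dupT v) w)" by simp
        moreover have "map (undupT v) (map (dupT v) u) = u" if "\<forall>l\<in>set u. length l = length v" for u :: "'a option list list"
          using that pos by (induction u) (auto simp: undupT_dupT)
        ultimately have wns: "w = rep_tuple rep ns"
          using lw letters_rep_tuple[of _ rep ns] lns by (simp add: d_def)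
        have dist: "distinct ns"
          unfolding distinct_conv_nth
        proof (intro allI impI)
          fix j k assume jk: "j < length ns" "k < length ns" "j \<noteq> k"
          have "\<exists>l\<in>set w. l ! j \<noteq> l ! k"
          proof (cases "j < k")
            case True then show ?thesis using wD[of "(j,k)"] jk lns by (auto simp: PR_def D_def)
          next
            case False then show ?thesis using wD[of "(k,j)"] jk lns by (force simp: PR_def D_def)
          qed
          then show "ns ! j \<noteq> ns ! k" using rep_tuple_col_eq[OF injr, of j ns k] jk wns by auto
        qed
        have "sorted ms" unfolding ms_def using nu_eq[OF fy] sorted_dupT s_supp_props[OF fy] by simp
        then have sns: "sorted ns" using sorted_dupT_D[of v ns] lns pos msd by (simp add: d_def)
        have cy: "count_list ms j = y j" for j using count_nu_cand[OF fy] nu_eq[OF fy] by (simp add: ms_def)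
        have cd: "map (count_list ms) ns = v" "\<forall>j. j \<notin> set ns \<longrightarrow> count_list ms j = 0"
          using count_dupT[OF dist, of v] lns msd by (auto simp: d_def)
        have my: "map y ns = v" using cd(1) cy by (metis map_eq_conv)
        have "supp y = set ns"
        proof (intro set_eqI iffI)
          fix j assume "j \<in> supp y"
          then show "j \<in> set ns" using cd(2) cy by (auto simp: supp_def)
        next
          fix j assume "j \<in> set ns"
          then have "y j \<in> set v" using my by auto
          then show "j \<in> supp y" using pos by (auto simp: supp_def)
        qed
        then have ss: "s_supp y = ns"
          using dist sns by (simp add: s_supp_def sorted_list_of_set_sort_remdups distinct_remdups_id sorted_sort_id)
        have "y \<in> Q_v v Y" using y(1) fy ss my by (simp add: Q_v_def e_word_def)
        then show "w \<in> rep_tuple rep ` P_v v Y" using ss wns by (auto simp: P_v_def)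
      qed
      have "P_v v Y \<subseteq> {ns. length ns = length v}" using P_v_len by blast
      then show "S_recognizable Alph rep (length v) (P_v v Y)"
        unfolding S_recognizable_def using eq regLL by (simp add: d_def)
    qed
  next
    assume H: "\<forall>v. (\<forall>x\<in>set v. 0 < x) \<longrightarrow> S_recognizable Alph rep (length v) (P_v v Y)"
    show "weakly_codable Alph rep Y"
      unfolding weakly_codable_def
    proof (intro allI)
      fix k i
      define Z where "Z = {nu y | y. y \<in> Y \<and> sum_le y k} \<inter> {ns. length ns = i}"
      define V where "V = {v::nat list. (\<forall>x\<in>set v. 0 < x) \<and> sum_list v = i \<and> i \<le> k}"
      have Zeq: "Z = (\<Union>v\<in>V. dupT v ` P_v v Y)"
      proof (intro set_eqI iffI)
        fix ns assume "ns \<in> Z"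
        then obtain y where y: "y \<in> Y" "sum_le y k" "length (nu y) = i" "ns = nu y" by (auto simp: Z_def)
        have fy: "finite (supp y)" using y(2) by (simp add: sum_le_def)
        have "e_word y \<in> V" using e_word_pos[of y] y length_nu[OF fy] sum_supp_e_word[OF fy]
          by (auto simp: V_def sum_le_def)
        moreover have "s_supp y \<in> P_v (e_word y) Y" using y fy by (auto simp: P_v_def Q_v_def)
        ultimately show "ns \<in> (\<Union>v\<in>V. dupT v ` P_v v Y)" using nu_eq[OF fy] y(4) by blast
      next
        fix ns assume "ns \<in> (\<Union>v\<in>V. dupT v ` P_v v Y)"
        then obtain v y where v: "v \<in> V" and y: "y \<in> Y" "finite (supp y)" "e_word y = v" "ns = dupT v (s_supp y)"
          by (auto simp: P_v_def Q_v_def)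
        have "nu y = ns" using nu_eq[OF y(2)] y by simp
        moreover have "sum y (supp y) = i" using sum_supp_e_word[OF y(2)] y(3) v by (simp add: V_def)
        moreover have "sum_le y k" using calculation(2) v y(2) by (simp add: sum_le_def V_def)
        moreover have "length ns = i" using calculation(1,2) length_nu[OF y(2)] by simp
        ultimately show "ns \<in> Z" unfolding Z_def using y(1) by blast
      qed
      have "rep_tuple rep ` Z = (\<Union>v\<in>V. map (dupT v) ` rep_tuple rep ` P_v v Y)"
      proof -
        have "rep_tuple rep ` dupT v ` P_v v Y = map (dupT v) ` rep_tuple rep ` P_v v Y" if "v \<in> V" for v
        proof -
          have "rep_tuple rep (dupT v ns) = map (dupT v) (rep_tuple rep ns)" if "ns \<in> P_v v Y" for ns
            using rep_tuple_dupT[of v ns rep] P_v_len[OF that] \<open>v \<in> V\<close> by (simp add: V_def)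
          then show ?thesis by (auto simp: image_image intro!: image_cong)
        qed
        then show ?thesis unfolding Zeq image_UN by simp
      qed
      moreover have "regular_on (tuple_alphabet Alph i) (\<Union>v\<in>V. map (dupT v) ` rep_tuple rep ` P_v v Y)"
      proof (rule reg_UN)
        show "finite V" unfolding V_def by (rule finite_V)
        fix v assume v: "v \<in> V"
        then have pos: "\<forall>x\<in>set v. 0 < x" and si: "sum_list v = i" by (auto simp: V_def)
        have "regular_on (tuple_alphabet Alph (length v)) (rep_tuple rep ` P_v v Y)"
          using H pos by (simp add: S_recognizable_def)
        then show "regular_on (tuple_alphabet Alph i) (map (dupT v) ` rep_tuple rep ` P_v v Y)"
          using reg_dup[OF pos] si by blast
      qed
      ultimately show "S_recognizable Alph rep i ({nu y |y. y \<in> Y \<and> sum_le y k} \<inter> {ns. length ns = i})"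
        unfolding S_recognizable_def Z_def[symmetric] by (auto simp: Z_def)
    qed
  qed
qed

end
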